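(* Let $\lambda$ be a nonzero real number. For every $n\in\mathbb{N}$ and every real $x$ with $1+\lambda x>0$, \[ \mathrm{Bel}_{n,\lambda}'(x)=\frac{1}{1+\lambda x}\sum_{l=0}^{n-1}\binom{n}{l}\big(\mathrm{Bel}_{l,\lambda}(x)-\lambda\,\mathrm{Bel}_{l+1,\lambda}(x)\big), \] where $\mathrm{Bel}_{n,\lambda}'(x)=\frac{d}{dx}\mathrm{Bel}_{n,\lambda}(x)$.
   Context: For nonzero real $\lambda$, $e_\lambda(x)=(1+\lambda x)^{1/\lambda}$ and $e_\lambda^{-1}(x)=(1+\lambda x)^{-1/\lambda}$. The new type degenerate Bell polynomials $\mathrm{Bel}_{n,\lambda}(x)$ are defined by $e_{\lambda}(xe^{t})\,e_{\lambda}^{-1}(x)=\big(\frac{1+\lambda xe^t}{1+\lambda x}\big)^{1/\lambda}=\sum_{n=0}^{\infty}\mathrm{Bel}_{n,\lambda}(x)\frac{t^{n}}{n!}$ (expansion in powers of $t$). *)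

theory Defs
  imports "HOL-Analysis.Analysis"
begin

text \<open>Generating function of the new type degenerate Bell polynomials:
  e_lam(x e^t) e_lam^{-1}(x) = ((1 + lam x e^t)/(1 + lam x))^(1/lam).\<close>
definition degBel_gf :: "real \<Rightarrow> real \<Rightarrow> real \<Rightarrow> real" where
  "degBel_gf lam x t = ((1 + lam * x * exp t) / (1 + lam * x)) powr (1 / lam)"

text \<open>Bel_{n,lam}(x) is n! times the coefficient of t^n in the expansion in powers of t,
  i.e. the n-th derivative in t at t = 0.\<close>
definition degBel :: "nat \<Rightarrow> real \<Rightarrow> real \<Rightarrow> real" where
  "degBel n lam x = ((deriv ^^ n) (degBel_gf lam x)) 0"

end

theory Submission
  imports Defs "HOL-Combinatorics.Stirling"
begin

definition ffc :: "real \<Rightarrow> nat \<Rightarrow> real" where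
  "ffc c k = (\<Prod>i<k. (c - real i))"

lemma ffc_0 [simp]: "ffc c 0 = 1" by (simp add: ffc_def)
lemma ffc_Suc: "ffc c (Suc k) = ffc c k * (c - real k)" by (simp add: ffc_def)

definition acoef :: "real \<Rightarrow> nat \<Rightarrow> nat \<Rightarrow> real" where
  "acoef c n k = real (Stirling n k) * ffc c k"

lemma acoef_shift:
  "(\<Sum>k\<le>Suc n. acoef c (Suc n) k * X k) =
   (\<Sum>k\<le>n. acoef c n k * (real k * X k + (c - real k) * X (Suc k)))"
proof -
  have "(\<Sum>k\<le>Suc n. acoef c (Suc n) k * X k) = (\<Sum>k\<le>n. acoef c (Suc n) (Suc k) * X (Suc k))"
    by (subst sum.atMost_Suc_shift) (simp add: acoef_def)
  also have "\<dots> = (\<Sum>k\<le>n. real (Suc k) * acoef c n (Suc k) * X (Suc k))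
      + (\<Sum>k\<le>n. (c - real k) * acoef c n k * X (Suc k))"
    by (simp add: acoef_def ffc_Suc sum.distrib[symmetric] algebra_simps)
  also have "(\<Sum>k\<le>n. real (Suc k) * acoef c n (Suc k) * X (Suc k)) = (\<Sum>k\<le>n. real k * acoef c n k * X k)"
  proof -
    have "(\<Sum>k\<le>Suc n. real k * acoef c n k * X k) = (\<Sum>k\<le>n. real (Suc k) * acoef c n (Suc k) * X (Suc k))"
      by (subst sum.atMost_Suc_shift) simp
    moreover have "(\<Sum>k\<le>Suc n. real k * acoef c n k * X k) = (\<Sum>k\<le>n. real k * acoef c n k * X k)"
      by (simp add: acoef_def)
    ultimately show ?thesis by simp
  qed
  finally have L: "(\<Sum>k\<le>Suc n. acoef c (Suc n) k * X k) = (\<Sum>k\<le>n. real k * acoef c n k * X k) + (\<Sum>k\<le>n. (c - real k) * acoef c n k * X (Suc k))" .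
  have eq: "(\<Sum>k\<le>n. acoef c n k * (real k * X k + (c - real k) * X (Suc k))) = (\<Sum>k\<le>n. real k * acoef c n k * X k) + (\<Sum>k\<le>n. (c - real k) * acoef c n k * X (Suc k))"
    by (simp add: sum.distrib[symmetric] algebra_simps)
  show ?thesis using L eq by simp
qed

lemma T_deriv:
  fixes a c t :: real
  assumes "1 + a * exp t > 0"
  shows "((\<lambda>t. (a * exp t) ^ k * (1 + a * exp t) powr (c - real k)) has_real_derivative
     (real k * ((a * exp t) ^ k * (1 + a * exp t) powr (c - real k)) +
      (c - real k) * ((a * exp t) ^ Suc k * (1 + a * exp t) powr (c - real (Suc k))))) (at t)"
  using assms
  apply (auto intro!: derivative_eq_intros)
  apply (cases k)
   apply (auto simp: algebra_simps)
  done

definition Phi :: "real \<Rightarrow> real \<Rightarrow> nat \<Rightarrow> real \<Rightarrow> real" where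
  "Phi lam y n t = (\<Sum>k\<le>n. acoef (1/lam) n k * ((lam*y*exp t)^k * (1 + lam*y*exp t) powr (1/lam - real k)))
     / (1 + lam*y) powr (1/lam)"

lemma Phi_deriv:
  assumes "1 + lam*y*exp t > 0"
  shows "(Phi lam y n has_real_derivative Phi lam y (Suc n) t) (at t)"
proof -
  have D: "((\<lambda>t. \<Sum>k\<le>n. acoef (1/lam) n k * ((lam*y*exp t)^k * (1 + lam*y*exp t) powr (1/lam - real k)))
     has_real_derivative (\<Sum>k\<le>n. acoef (1/lam) n k * (real k * ((lam*y*exp t)^k * (1 + lam*y*exp t) powr (1/lam - real k))
        + (1/lam - real k) * ((lam*y*exp t)^Suc k * (1 + lam*y*exp t) powr (1/lam - real (Suc k)))))) (at t)"
    using T_deriv[OF assms] by (auto intro!: DERIV_sum DERIV_cmult)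
  show ?thesis unfolding Phi_def
    using DERIV_cdivide[OF D, of "(1+lam*y) powr (1/lam)"]
      acoef_shift[of "1/lam" n "\<lambda>k. (lam*y*exp t)^k * (1 + lam*y*exp t) powr (1/lam - real k)"]
    by simp
qed

lemma iter:
  assumes "1 + lam*y > 0"
  shows "\<forall>t\<in>{t. 1 + lam*y*exp t > 0}. (deriv^^n) (degBel_gf lam y) t = Phi lam y n t"
proof (induction n)
  case 0
  show ?case using assms
    by (auto simp: degBel_gf_def Phi_def acoef_def powr_divide)
next
  case (Suc n)
  have op: "open {t. 1 + lam*y*exp t > (0::real)}"
    by (intro open_Collect_less continuous_intros)
  show ?case
  proof
    fix t assume t: "t \<in> {t. 1 + lam*y*exp t > (0::real)}"
    have "(Phi lam y n has_real_derivative Phi lam y (Suc n) t) (at t)"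
      using Phi_deriv t by simp
    then have "((deriv^^n) (degBel_gf lam y) has_real_derivative Phi lam y (Suc n) t) (at t)"
      by (rule has_field_derivative_transform_within_open[OF _ op t]) (use Suc.IH in auto)
    then show "(deriv^^Suc n) (degBel_gf lam y) t = Phi lam y (Suc n) t"
      by (simp add: DERIV_imp_deriv)
  qed
qed

lemma Bel_formula:
  assumes "1 + lam*y > 0"
  shows "degBel n lam y = (\<Sum>k\<le>n. acoef (1/lam) n k * (lam*y/(1+lam*y))^k)"
proof -
  have "degBel n lam y = Phi lam y n 0" using iter[OF assms, of n] assms by (simp add: degBel_def)
  also have "\<dots> = (\<Sum>k\<le>n. acoef (1/lam) n k * ((lam*y)^k * (1 + lam*y) powr (1/lam - real k)) / (1 + lam*y) powr (1/lam))"
    unfolding Phi_def by (simp add: sum_divide_distrib)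
  also have "\<dots> = (\<Sum>k\<le>n. acoef (1/lam) n k * (lam*y/(1+lam*y))^k)"
    using assms by (intro sum.cong refl) (simp add: powr_diff powr_realpow power_divide)
  finally show ?thesis .
qed

lemma stirling_binom: "Stirling (Suc n) (Suc k) = (\<Sum>l\<le>n. (n choose l) * Stirling l k)"
proof (induction n arbitrary: k)
  case 0
  then show ?case by (cases k) auto
next
  case (Suc n)
  have A: "(\<Sum>l\<le>Suc n. (Suc n choose l) * Stirling l k) = Stirling 0 k
      + (\<Sum>l\<le>n. (n choose l) * Stirling (Suc l) k) + (\<Sum>l\<le>n. (n choose Suc l) * Stirling (Suc l) k)"
    by (subst sum.atMost_Suc_shift) (simp add: sum.distrib algebra_simps)
  have B1: "(\<Sum>l\<le>Suc n. (n choose l) * Stirling l k) = Stirling 0 k + (\<Sum>l\<le>n. (n choose Suc l) * Stirling (Suc l) k)"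
    by (subst sum.atMost_Suc_shift) simp
  have B2: "(\<Sum>l\<le>Suc n. (n choose l) * Stirling l k) = (\<Sum>l\<le>n. (n choose l) * Stirling l k)"
    by simp
  have B: "Stirling 0 k + (\<Sum>l\<le>n. (n choose Suc l) * Stirling (Suc l) k) = Stirling (Suc n) (Suc k)"
    using B1 B2 Suc.IH[of k] by simp
  have C: "(\<Sum>l\<le>n. (n choose l) * Stirling (Suc l) k) = k * Stirling (Suc n) (Suc k) + Stirling (Suc n) k"
  proof (cases k)
    case 0
    then show ?thesis by simp
  next
    case (Suc j)
    have "(\<Sum>l\<le>n. (n choose l) * Stirling (Suc l) k)
       = Suc j * (\<Sum>l\<le>n. (n choose l) * Stirling l (Suc j)) + (\<Sum>l\<le>n. (n choose l) * Stirling l j)"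
      using Suc by (simp add: sum.distrib sum_distrib_left algebra_simps)
    also have "\<dots> = Suc j * Stirling (Suc n) (Suc (Suc j)) + Stirling (Suc n) (Suc j)"
      using Suc.IH[of "Suc j"] Suc.IH[of j] by simp
    finally show ?thesis using Suc by simp
  qed
  show ?case using A B C by simp
qed

lemma stirling_binom2: "Suc k * Stirling n (Suc k) = (\<Sum>l<n. (n choose l) * Stirling l k)"
proof -
  have "Stirling (Suc n) (Suc k) = (\<Sum>l<n. (n choose l) * Stirling l k) + Stirling n k"
    unfolding stirling_binom lessThan_Suc_atMost[symmetric] by simp
  moreover have "Stirling (Suc n) (Suc k) = Suc k * Stirling n (Suc k) + Stirling n k" by simp
  ultimately show ?thesis by linarith
qed

theorem theorem10:
  fixes lam x :: real and n :: nat
  assumes "lam \<noteq> 0" and "1 + lam * x > 0"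
  shows "((\<lambda>y. degBel n lam y) has_real_derivative
           (1 / (1 + lam * x)) *
           (\<Sum>l<n. real (n choose l) * (degBel l lam x - lam * degBel (Suc l) lam x)))
         (at x)"
proof -
  define c where "c = 1/lam"
  define u where "u = 1 + lam * x"
  define r where "r = lam * x / u"
  have u: "u > 0" using assms u_def by simp
  have U: "open {y. 1 + lam * y > (0::real)}"
    by (intro open_Collect_less continuous_intros)
  have D: "((\<lambda>y. \<Sum>k\<le>n. acoef c n k * (lam*y/(1+lam*y))^k) has_real_derivative
      (\<Sum>k\<le>n. acoef c n k * (real k * r^(k-1) * (lam/u^2)))) (at x)"
    using u unfolding u_def r_def
    apply (auto intro!: derivative_eq_intros)
    apply (intro sum.cong refl)
    apply (simp add: power2_eq_square algebra_simps)
    done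
  have D2: "((\<lambda>y. degBel n lam y) has_real_derivative
      (\<Sum>k\<le>n. acoef c n k * (real k * r^(k-1) * (lam/u^2)))) (at x)"
    by (rule has_field_derivative_transform_within_open[OF D U]) (use assms in \<open>auto simp: Bel_formula c_def\<close>)
  have r1: "1 - r = 1/u" using u unfolding r_def u_def by (simp add: field_simps)
  have lc: "lam * c = 1" using assms(1) c_def by simp
  have Bl: "\<And>l. degBel l lam x = (\<Sum>k\<le>l. acoef c l k * r^k)"
    using assms(2) by (simp add: Bel_formula c_def r_def u_def)
  have BSl: "\<And>l. degBel (Suc l) lam x = (\<Sum>k\<le>l. acoef c l k * (real k * r^k + (c - real k) * r^(Suc k)))"
    unfolding Bl by (rule acoef_shift[of c _ "\<lambda>k. r^k"])
  have diff: "\<And>l. degBel l lam x - lam * degBel (Suc l) lam x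
      = lam * (1/u) * (\<Sum>k\<le>l. real (Stirling l k) * ffc c (Suc k) * r^k)"
  proof -
    fix l
    have "degBel l lam x - lam * degBel (Suc l) lam x
       = (\<Sum>k\<le>l. acoef c l k * r^k - lam * (acoef c l k * (real k * r^k + (c - real k) * r^(Suc k))))"
      unfolding BSl unfolding Bl by (simp add: sum_subtractf sum_distrib_left)
    also have "\<dots> = (\<Sum>k\<le>l. lam * (1 - r) * (real (Stirling l k) * ffc c (Suc k) * r^k))"
    proof (intro sum.cong refl)
      fix k
      have "lam * (c - real k) = 1 - lam * real k" using lc by (simp add: algebra_simps)
      then show "acoef c l k * r^k - lam * (acoef c l k * (real k * r^k + (c - real k) * r^(Suc k)))
          = lam * (1 - r) * (real (Stirling l k) * ffc c (Suc k) * r^k)"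
        unfolding acoef_def ffc_Suc by (simp add: algebra_simps)
    qed
    finally show "degBel l lam x - lam * degBel (Suc l) lam x
      = lam * (1/u) * (\<Sum>k\<le>l. real (Stirling l k) * ffc c (Suc k) * r^k)"
      by (simp add: sum_distrib_left r1)
  qed
  have ext: "\<And>l. l < n \<Longrightarrow> (\<Sum>k\<le>l. real (Stirling l k) * ffc c (Suc k) * r^k)
       = (\<Sum>k<n. real (Stirling l k) * ffc c (Suc k) * r^k)"
    by (rule sum.mono_neutral_left) auto
  have "(1 / (1 + lam * x)) *
           (\<Sum>l<n. real (n choose l) * (degBel l lam x - lam * degBel (Suc l) lam x))
      = (\<Sum>l<n. \<Sum>k<n. lam / u^2 * (real (n choose l) * real (Stirling l k) * ffc c (Suc k) * r^k))"
  proof -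
    have "(\<Sum>l<n. real (n choose l) * (degBel l lam x - lam * degBel (Suc l) lam x))
       = (\<Sum>l<n. real (n choose l) * (lam * (1/u) * (\<Sum>k<n. real (Stirling l k) * ffc c (Suc k) * r^k)))"
      by (intro sum.cong refl) (simp add: diff ext)
    then show ?thesis unfolding u_def[symmetric]
      by (simp add: sum_distrib_left power2_eq_square mult_ac)
  qed
  also have "\<dots> = (\<Sum>k<n. \<Sum>l<n. lam / u^2 * (real (n choose l) * real (Stirling l k) * ffc c (Suc k) * r^k))"
    by (rule sum.swap)
  also have "\<dots> = (\<Sum>k<n. lam / u^2 * (real (\<Sum>l<n. (n choose l) * Stirling l k) * ffc c (Suc k) * r^k))"
    by (simp add: of_nat_sum sum_distrib_left sum_distrib_right mult_ac)
  also have "\<dots> = (\<Sum>k<n. lam / u^2 * (real (Suc k * Stirling n (Suc k)) * ffc c (Suc k) * r^k))"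
    by (simp only: stirling_binom2)
  also have "\<dots> = (\<Sum>k\<le>n. acoef c n k * (real k * r^(k-1) * (lam/u^2)))"
    unfolding lessThan_Suc_atMost[symmetric] sum.lessThan_Suc_shift
    by (simp add: acoef_def algebra_simps)
  finally show ?thesis using D2 by simp
qed

end
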